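(* Let $SP_t(k)$ denote the smallest $n$ such that $PPL_t(n)=k$. Then $SP_t(1)=1$, $SP_t(2)=2$, $SP_t(3)=6$, and for all $k>0$, \[SP_t(k+3)=16\,SP_t(k)-6.\]
   Context: The Thue-Morse word $t=t[1]t[2]\cdots=abbabaabbaababba\cdots$ is the fixed point starting with $a$ of the morphism $a\mapsto abba,\ b\mapsto baab$. A palindrome is a word $p=p[1]\cdots p[n]$ with $p[i]=p[n-i+1]$ for all $i$. $PPL_t(n)$ is the minimal number of nonempty palindromes whose concatenation equals the prefix of $t$ of length $n$. *)

theory Defs
  imports Main
begin

datatype letter = a | b

fun tm_img :: "letter \<Rightarrow> letter list" where
  "tm_img a = [a, b, b, a]"
| "tm_img b = [b, a, a, b]"

definition tm_morph :: "letter list \<Rightarrow> letter list" where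
  "tm_morph w = concat (map tm_img w)"

text \<open>Prefix of length n of the fixed point t starting with a:
  (tm_morph ^^ n) [a] has length 4^n >= n and is a prefix of t.\<close>
definition tm_prefix :: "nat \<Rightarrow> letter list" where
  "tm_prefix n = take n ((tm_morph ^^ n) [a])"

definition palindrome :: "'x list \<Rightarrow> bool" where
  "palindrome p \<longleftrightarrow> rev p = p"

definition pal_length :: "'x list \<Rightarrow> nat" where
  "pal_length w = (LEAST k. \<exists>ps. length ps = k \<and> concat ps = w \<and>
                      (\<forall>p\<in>set ps. p \<noteq> [] \<and> palindrome p))"

definition PPL_t :: "nat \<Rightarrow> nat" where
  "PPL_t n = pal_length (tm_prefix n)"

definition SP_t :: "nat \<Rightarrow> nat" where
  "SP_t k = (LEAST n. PPL_t n = k)"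

end

theory Submission
  imports Defs
begin


fun flip :: "letter \<Rightarrow> letter" where "flip a = b" | "flip b = a"

lemma flip_neq[simp]: "flip x \<noteq> x" "x \<noteq> flip x" by (cases x; simp)+
lemma flip_flip[simp]: "flip (flip x) = x" by (cases x; simp)
lemma flip_inj[simp]: "(flip x = flip y) = (x = y)" by (cases x; cases y; simp)

fun tm :: "nat \<Rightarrow> letter" where
  "tm n = (if n = 0 then a else if even n then tm (n div 2) else flip (tm (n div 2)))"

lemma tm_0: "tm 0 = a" by simp
lemma tm_even: "tm (2*n) = tm n" by (cases "n = 0") simp_all
lemma tm_odd: "tm (2*n+1) = flip (tm n)" by simp
declare tm.simps[simp del]

lemma tm_4_0: "tm (4*j) = tm j" using tm_even[of "2*j"] tm_even[of j] by (simp add: mult.assoc[symmetric])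
lemma tm_4_1: "tm (4*j+1) = flip (tm j)" using tm_odd[of "2*j"] tm_even[of j] by (simp add: mult.assoc[symmetric])
lemma tm_4_2: "tm (4*j+2) = flip (tm j)"
proof -
  have "4*j+2 = 2*(2*j+1)" by simp
  then have "tm (4*j+2) = tm (2*j+1)" by (simp only: tm_even)
  then show ?thesis using tm_odd[of j] by simp
qed
lemma tm_4_3: "tm (4*j+3) = tm j"
proof -
  have "4*j+3 = 2*(2*j+1)+1" by simp
  then have "tm (4*j+3) = flip (tm (2*j+1))" by (simp only: tm_odd)
  then show ?thesis using tm_odd[of j] by simp
qed

lemma tm4: "r < 4 \<Longrightarrow> tm (4*j+r) = (if r = 1 \<or> r = 2 then flip (tm j) else tm j)"
proof -
  assume "r < 4" then have "r = 0 \<or> r = 1 \<or> r = 2 \<or> r = 3" by arith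
  then show ?thesis using tm_4_0 tm_4_1 tm_4_2 tm_4_3 by auto
qed

lemma img_tm: "tm_img (tm j) = map tm [4*j..<4*j+4]"
proof -
  have "[4*j..<4*j+4] = [4*j, 4*j+1, 4*j+2, 4*j+3]" by (simp add: upt_rec)
  then show ?thesis using tm_4_0[of j] tm_4_1[of j] tm_4_2[of j] tm_4_3[of j]
    by (cases "tm j") simp_all
qed

lemma morph_append: "tm_morph (u @ v) = tm_morph u @ tm_morph v"
  by (simp add: tm_morph_def)

lemma morph_tm: "tm_morph (map tm [0..<k]) = map tm [0..<4*k]"
proof (induction k)
  case 0 then show ?case by (simp add: tm_morph_def)
next
  case (Suc k)
  have e: "[0..<4*k+4] = [0..<4*k] @ [4*k..<4*k+4]"
    using upt_add_eq_append[of 0 "4*k" 4] by simp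
  have e2: "4 * Suc k = 4*k+4" by simp
  show ?case unfolding e2 e using Suc by (simp add: morph_append) (simp add: tm_morph_def img_tm)
qed

lemma pow_tm: "(tm_morph ^^ n) [a] = map tm [0..<4^n]"
proof (induction n)
  case 0 then show ?case by (simp add: tm_0)
next
  case (Suc n) then show ?case by (simp add: morph_tm)
qed

lemma tm_prefix_eq: "tm_prefix n = map tm [0..<n]"
proof -
  have "n < 2^n" by (rule less_exp)
  also have "(2::nat)^n \<le> 4^n" by (simp add: power_mono)
  finally have "n \<le> 4^n" by simp
  then show ?thesis unfolding tm_prefix_def pow_tm by (simp add: take_map)
qed


definition decomp :: "nat \<Rightarrow> 'x list \<Rightarrow> bool" where
  "decomp k w \<longleftrightarrow> (\<exists>ps. length ps = k \<and> concat ps = w \<and> (\<forall>p\<in>set ps. p \<noteq> [] \<and> palindrome p))"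

lemma pal_length_alt: "pal_length w = (LEAST k. decomp k w)"
  unfolding pal_length_def decomp_def by simp

lemma decomp_len: "decomp (length w) w"
  unfolding decomp_def
  by (rule exI[of _ "map (\<lambda>x. [x]) w"]) (auto simp: palindrome_def)

lemma decomp_pal_length: "decomp (pal_length w) w"
  unfolding pal_length_alt by (rule LeastI, rule decomp_len)

lemma pal_length_le: "decomp k w \<Longrightarrow> pal_length w \<le> k"
  unfolding pal_length_alt by (rule Least_le)

lemma pal_length_Nil: "pal_length [] = 0"
proof -
  have "decomp 0 []" unfolding decomp_def by auto
  then show ?thesis using pal_length_le by fastforce
qed

lemma pal_length_snoc: "palindrome v \<Longrightarrow> v \<noteq> [] \<Longrightarrow> pal_length (u @ v) \<le> pal_length u + 1"
proof -
  assume pv: "palindrome v" "v \<noteq> []"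
  obtain ps where ps: "length ps = pal_length u" "concat ps = u" "\<forall>p\<in>set ps. p \<noteq> [] \<and> palindrome p"
    using decomp_pal_length[of u] unfolding decomp_def by blast
  have "decomp (pal_length u + 1) (u @ v)" unfolding decomp_def
    by (rule exI[of _ "ps @ [v]"]) (use ps pv in auto)
  then show ?thesis by (rule pal_length_le)
qed

lemma pal_length_dp: "w \<noteq> [] \<Longrightarrow> \<exists>u v. w = u @ v \<and> v \<noteq> [] \<and> palindrome v \<and> pal_length u + 1 \<le> pal_length w"
proof -
  assume w: "w \<noteq> []"
  obtain ps where ps: "length ps = pal_length w" "concat ps = w" "\<forall>p\<in>set ps. p \<noteq> [] \<and> palindrome p"
    using decomp_pal_length[of w] unfolding decomp_def by blast
  have "ps \<noteq> []" using ps(2) w by auto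
  then obtain qs v where qs: "ps = qs @ [v]" by (metis rev_exhaust)
  have "decomp (length qs) (concat qs)" unfolding decomp_def using ps(3) qs by auto
  then have "pal_length (concat qs) \<le> length qs" by (rule pal_length_le)
  then show ?thesis using ps qs by (intro exI[of _ "concat qs"] exI[of _ v]) auto
qed

definition f :: "nat \<Rightarrow> nat" where "f n = pal_length (map tm [0..<n])"

lemma PPL_f: "PPL_t n = f n" unfolding PPL_t_def f_def tm_prefix_eq ..

definition tpal :: "nat \<Rightarrow> nat \<Rightarrow> bool" where
  "tpal s N \<longleftrightarrow> (\<forall>k<N-s. tm (s+k) = tm (N-1-k))"

lemma tpal_iff: "s \<le> N \<Longrightarrow> palindrome (map tm [s..<N]) \<longleftrightarrow> tpal s N"
  unfolding palindrome_def tpal_def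
  by (auto simp: list_eq_iff_nth_eq rev_nth)

lemma split_upt: "s \<le> N \<Longrightarrow> map tm [0..<N] = map tm [0..<s] @ map tm [s..<N]"
  by (metis map_append upt_add_eq_append zero_le le_add_diff_inverse)

lemma f_0: "f 0 = 0" unfolding f_def by (simp add: pal_length_Nil)

lemma f_pal: "s < N \<Longrightarrow> tpal s N \<Longrightarrow> f N \<le> f s + 1"
  unfolding f_def using split_upt[of s N] tpal_iff[of s N] pal_length_snoc[of "map tm [s..<N]" "map tm [0..<s]"]
  by auto

lemma f_dp: "0 < N \<Longrightarrow> \<exists>s<N. tpal s N \<and> f s + 1 \<le> f N"
proof -
  assume N: "0 < N"
  then obtain u v where uv: "map tm [0..<N] = u @ v" "v \<noteq> []" "palindrome v" "pal_length u + 1 \<le> f N"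
    using pal_length_dp[of "map tm [0..<N]"] unfolding f_def by auto
  define s where "s = length u"
  have sN: "s < N" using uv(1,2) unfolding s_def by (metis length_append length_map length_upt diff_zero length_greater_0_conv less_add_same_cancel1)
  have "map tm [0..<N] = map tm [0..<s] @ map tm [s..<N]" using sN by (simp add: split_upt)
  then have "u = map tm [0..<s]" "v = map tm [s..<N]" using uv(1) unfolding s_def
    by (metis append_eq_append_conv length_map length_upt diff_zero)+
  then show ?thesis using sN uv tpal_iff[of s N] unfolding f_def by auto
qed


lemma tpal_sym: "tpal s N \<Longrightarrow> s \<le> P \<Longrightarrow> P < N \<Longrightarrow> P + Q = s + N - 1 \<Longrightarrow> tm P = tm Q"
proof -
  assume h: "tpal s N" "s \<le> P" "P < N" "P + Q = s + N - 1"
  have k: "P - s < N - s" using h by linarith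
  have "tm (s + (P - s)) = tm (N - 1 - (P - s))" using h(1) k unfolding tpal_def by blast
  moreover have "N - 1 - (P - s) = Q" using h by linarith
  ultimately show ?thesis using h by simp
qed

lemma tpal_single: "tpal N (N+1)" unfolding tpal_def by simp

lemma tpal_inner: "tpal s (N+1) \<Longrightarrow> s < N \<Longrightarrow> tpal (s+1) N"
  unfolding tpal_def
proof (intro allI impI)
  fix k assume h: "\<forall>k<N + 1 - s. tm (s + k) = tm (N + 1 - 1 - k)" "s < N" "k < N - (s+1)"
  have k: "k + 1 < N + 1 - s" using h by linarith
  have "tm (s + (k+1)) = tm (N + 1 - 1 - (k+1))" using h(1) k by blast
  moreover have "s + (k+1) = s + 1 + k" "N + 1 - 1 - (k+1) = N - 1 - k" by simp_all
  ultimately show "tm (s + 1 + k) = tm (N - 1 - k)" by simp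
qed

lemma f_suc: "f (N+1) \<le> f N + 1" using f_pal[of N "N+1"] tpal_single by simp

lemma f_pred: "f N \<le> f (N+1) + 1"
proof -
  obtain s where s: "s < N+1" "tpal s (N+1)" "f s + 1 \<le> f (N+1)" using f_dp[of "N+1"] by auto
  show ?thesis
  proof (cases "s = N")
    case True then show ?thesis using s by simp
  next
    case False
    then have sN: "s < N" using s by simp
    show ?thesis
    proof (cases "s + 1 = N")
      case True then show ?thesis using f_suc[of s] s by simp
    next
      case False
      then have "tpal (s+1) N" "s+1 < N" using tpal_inner s(2) sN by auto
      then have "f N \<le> f (s+1) + 1" by (rule f_pal[rotated])
      then show ?thesis using f_suc[of s] s by simp
    qed
  qed
qed

lemma f_up: "f (N + d) \<le> f N + d"
proof (induction d)
  case (Suc d) then show ?case using f_suc[of "N+d"] by simp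
qed simp

lemma f_down: "f N \<le> f (N + d) + d"
proof (induction d)
  case (Suc d) then show ?case using f_pred[of "N+d"] by simp
qed simp

lemma f_lip: "int (f M) \<le> int (f N) + \<bar>int M - int N\<bar>"
proof (cases "N \<le> M")
  case True then show ?thesis using f_up[of N "M-N"] by simp
next
  case False then show ?thesis using f_down[of M "N-M"] by simp
qed

lemma tpal4: "tpal s n \<Longrightarrow> tpal (4*s) (4*n)"
  unfolding tpal_def
proof (intro allI impI)
  fix k assume h: "\<forall>k<n - s. tm (s + k) = tm (n - 1 - k)" "k < 4 * n - 4 * s"
  define q r where "q = k div 4" and "r = k mod 4"
  have k: "k = 4*q + r" and r: "r < 4" unfolding q_def r_def by auto
  have q: "q < n - s" using h(2) k by linarith
  have e1: "4*s + k = 4*(s+q) + r" using k by simp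
  have e2: "4*n - 1 - k = 4*(n-1-q) + (3-r)" using k q r by simp
  have "tm (s+q) = tm (n-1-q)" using h(1) q by simp
  then show "tm (4 * s + k) = tm (4 * n - 1 - k)"
    unfolding e1 e2 using tm4[OF r, of "s+q"] tm4[of "3-r" "n-1-q"] r by auto
qed

lemma f4: "f (4*n) \<le> f n"
proof (induction n rule: less_induct)
  case (less n)
  show ?case
  proof (cases "n = 0")
    case True then show ?thesis by simp
  next
    case False
    then obtain s where s: "s < n" "tpal s n" "f s + 1 \<le> f n" using f_dp by blast
    have "f (4*n) \<le> f (4*s) + 1" using f_pal[OF _ tpal4[OF s(2)]] s(1) by simp
    also have "\<dots> \<le> f s + 1" using less s(1) by simp
    finally show ?thesis using s(3) by simp
  qed
qed

lemma f_upper: "int (f N) \<le> int (f m) + \<bar>int N - 4 * int m\<bar>"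
  using f_lip[of N "4*m"] f4[of m] by simp




lemma no_xxx:
  assumes h: "tm q = tm (q+1)" "tm (q+1) = tm (q+2)" shows False
proof (cases "even q")
  case True
  then obtain r where r: "q = 2*r" by blast
  have "tm q = tm r" "tm (q+1) = flip (tm r)" using r tm_odd[of r] tm_even[of r] by simp_all
  then show ?thesis using h by simp
next
  case False
  then obtain r where r: "q = 2*r+1" by (metis oddE)
  have "q+1 = 2*(r+1)" "q+2 = 2*(r+1)+1" using r by simp_all
  then have "tm (q+1) = tm (r+1)" "tm (q+2) = flip (tm (r+1))" using tm_odd[of "r+1"] tm_even[of "r+1"] by simp_all
  then show ?thesis using h by simp
qed

lemma tpal_even: "tpal s N \<Longrightarrow> s < N \<Longrightarrow> even (N - s) \<Longrightarrow> (s + N) mod 4 = 0"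
proof -
  assume h: "tpal s N" "s < N" "even (N - s)"
  define c where "c = (s+N) div 2"
  have "even (s + N)" using h(2,3) by (simp add: even_add)
  then have sc: "s + N = 2*c" unfolding c_def by simp
  have c1: "s \<le> c - 1" "c - 1 < N" "(c-1) + c = s + N - 1" "c \<ge> 1" using sc h(2,3) by presburger+
  have eq: "tm (c-1) = tm c" using tpal_sym[OF h(1) c1(1) c1(2) c1(3)] .
  have "even c"
  proof (rule ccontr)
    assume "odd c"
    then obtain q where q: "c = 2*q+1" by (metis oddE)
    then have "c - 1 = 2*q" by simp
    then have "tm (c-1) = tm q" "tm c = flip (tm q)" using q tm_odd[of q] tm_even[of q] by simp_all
    then show False using eq by simp
  qed
  then show ?thesis using sc by auto
qed

lemma tpal_odd5: "tpal s N \<Longrightarrow> odd (N - s) \<Longrightarrow> N - s \<ge> 5 \<Longrightarrow> False"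
proof -
  assume h: "tpal s N" "odd (N - s)" "N - s \<ge> 5"
  have "odd (s + N)" using h(2,3) by (metis add_diff_cancel_left' diff_is_0_eq' even_add le_add_diff_inverse nat_le_linear odd_pos)
  then obtain p where p: "s + N = 2*p + 1" by (metis oddE)
  have r: "s \<le> p - 2" "p + 2 < N" "p \<ge> 2" using p h(3) by linarith+
  have e1: "tm (p-2) = tm (p+2)" by (rule tpal_sym[OF h(1) r(1)]) (use r p in linarith)+
  have e2: "tm (p-1) = tm (p+1)" by (rule tpal_sym[OF h(1)]) (use r p in linarith)+
  consider q where "p = 2*q+2" | q where "p = 2*q+3"
  proof (cases "even p")
    case True then obtain q0 where "p = 2*q0" by blast
    then show ?thesis using that(1)[of "q0-1"] r(3) by simp
  next
    case False then obtain q0 where "p = 2*q0+1" by (metis oddE)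
    then show ?thesis using that(2)[of "q0-1"] r(3) by simp
  qed
  then show False
  proof cases
    case 1
    have pe: "p-2 = 2*q" "p-1 = 2*q+1" "p+1 = 2*(q+1)+1" "p+2 = 2*(q+2)" using 1 by simp_all
    have "tm (p-2) = tm q" "tm (p-1) = flip (tm q)" "tm (p+1) = flip (tm (q+1))" "tm (p+2) = tm (q+2)"
      unfolding pe by (rule tm_even tm_odd)+
    then have "tm q = tm (q+2)" "flip (tm q) = flip (tm (q+1))" using e1 e2 by simp_all
    then show False using no_xxx[of q] by simp
  next
    case 2
    have pe: "p-2 = 2*q+1" "p-1 = 2*(q+1)" "p+1 = 2*(q+2)" "p+2 = 2*(q+2)+1" using 2 by simp_all
    have "tm (p-2) = flip (tm q)" "tm (p-1) = tm (q+1)" "tm (p+1) = tm (q+2)" "tm (p+2) = flip (tm (q+2))"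
      unfolding pe by (rule tm_even tm_odd)+
    then have "tm (q+1) = tm (q+2)" "flip (tm q) = flip (tm (q+2))" using e1 e2 by simp_all
    then show False using no_xxx[of q] by simp
  qed
qed

lemma tpal3: "tpal s (s+3) \<Longrightarrow> s mod 4 \<noteq> 0"
proof
  assume h: "tpal s (s+3)" "s mod 4 = 0"
  then obtain j where j: "s = 4*j" by auto
  have "tm s = tm (s+2)" by (rule tpal_sym[OF h(1)]) simp_all
  then show False using j tm_4_0[of j] tm_4_2[of j] by simp
qed

lemma tpal_desub: "tpal s N \<Longrightarrow> s + N = 4*c \<Longrightarrow> s \<le> 4*x+3 \<Longrightarrow> 2*x < c \<Longrightarrow> tpal x (c-x)"
proof -
  assume h: "tpal s N" "s + N = 4*c" "s \<le> 4*x+3" "2*x < c"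
  have aux: "tm i = tm j" if ij: "x \<le> i" "i \<le> j" "i + j = c - 1" for i j
  proof (cases "i = j")
    case True then show ?thesis by simp
  next
    case False
    then have ij2: "i < j" using ij by simp
    show ?thesis
    proof (cases "i = x")
      case True
      have "tm (4*x+3) = tm (4*j)" by (rule tpal_sym[OF h(1)]) (use h ij ij2 True in linarith)+
      then show ?thesis using True tm_4_3[of x] tm_4_0[of j] by simp
    next
      case False
      have "tm (4*i) = tm (4*j+3)" by (rule tpal_sym[OF h(1)]) (use h ij ij2 False in linarith)+
      then show ?thesis using tm_4_3[of j] tm_4_0[of i] by simp
    qed
  qed
  show ?thesis unfolding tpal_def
  proof (intro allI impI)
    fix k assume k: "k < c - x - x"
    show "tm (x + k) = tm (c - x - 1 - k)"
    proof (cases "x + k \<le> c - x - 1 - k")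
      case True then show ?thesis using aux k by simp
    next
      case False then show ?thesis using aux[of "c - x - 1 - k" "x+k"] k by simp
    qed
  qed
qed


lemma f_pal_int: "x < y \<Longrightarrow> tpal x y \<Longrightarrow> int (f y) \<le> int (f x) + 1"
  using f_pal by fastforce

lemma key:
  assumes h: "tpal s N" "s < N"
  shows "\<exists>m'. int (f m') + \<bar>int N - 4 * int m'\<bar> \<le> int (f m) + \<bar>int s - 4 * int m\<bar> + 1"
proof -
  consider "N - s = 1" | "N - s = 3" | "odd (N - s)" "N - s \<ge> 5" | "even (N - s)"
  proof -
    have "N-s=1 \<or> N-s=3 \<or> (odd (N-s) \<and> N-s \<ge> 5) \<or> even (N-s)" by presburger
    then show ?thesis using that by blast
  qed
  then show ?thesis
  proof cases
    case 1
    then show ?thesis by (intro exI[of _ m]) auto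
  next
    case 2
    then have N: "N = s + 3" using h by simp
    have s4: "s mod 4 \<noteq> 0" using tpal3 h(1) N by simp
    show ?thesis
    proof (cases "4*m \<le> s")
      case True
      then have "4*m+1 \<le> s" using s4 by (metis le_antisym mod_mult_self1_is_0 not_less_eq_eq Suc_eq_plus1)
      then show ?thesis using f_suc[of m] N by (intro exI[of _ "m+1"]) auto
    next
      case False
      then show ?thesis using N by (intro exI[of _ m]) auto
    qed
  next
    case 3
    then show ?thesis using tpal_odd5 h(1) by blast
  next
    case 4
    then have "(s + N) mod 4 = 0" using tpal_even h by blast
    then obtain c where c: "s + N = 4*c" by auto
    show ?thesis
    proof (cases "c \<le> 2*m")
      case True
      then show ?thesis using c h(2) by (intro exI[of _ m]) auto
    next
      case False
      show ?thesis
      proof (cases "s \<le> 4*m+3")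
        case True
        have tp: "tpal m (c-m)" using tpal_desub[OF h(1) c True] False by simp
        have "int (f (c-m)) \<le> int (f m) + 1" using f_pal_int[OF _ tp] False by simp
        moreover have "int (c - m) = int c - int m" using False by simp
        ultimately show ?thesis using c by (intro exI[of _ "c-m"]) auto
      next
        case False2: False
        define x0 where "x0 = s div 4"
        have x0: "s \<le> 4*x0+3" "4*x0 \<le> s" "m < x0" unfolding x0_def using False2 by auto
        have x0c: "2*x0 < c" using x0 c h(2) by linarith
        have tp: "tpal x0 (c-x0)" using tpal_desub[OF h(1) c x0(1) x0c] .
        have "int (f (c-x0)) \<le> int (f x0) + 1" using f_pal_int[OF _ tp] x0c by simp
        moreover have "int (f x0) \<le> int (f m) + \<bar>int x0 - int m\<bar>" by (rule f_lip)
        moreover have "int (c - x0) = int c - int x0" using x0c by simp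
        ultimately show ?thesis using c x0 by (intro exI[of _ "c-x0"]) auto
      qed
    qed
  qed
qed

lemma f_lower: "\<exists>m. int (f m) + \<bar>int N - 4 * int m\<bar> \<le> int (f N)"
proof (induction N rule: less_induct)
  case (less N)
  show ?case
  proof (cases "N = 0")
    case True then show ?thesis by (intro exI[of _ 0]) (simp add: f_0)
  next
    case False
    then obtain s where s: "s < N" "tpal s N" "f s + 1 \<le> f N" using f_dp by blast
    obtain m where m: "int (f m) + \<bar>int s - 4 * int m\<bar> \<le> int (f s)" using less s(1) by blast
    obtain m' where "int (f m') + \<bar>int N - 4 * int m'\<bar> \<le> int (f m) + \<bar>int s - 4 * int m\<bar> + 1"
      using key[OF s(2) s(1)] by blast
    then show ?thesis using m s(3) by (intro exI[of _ m']) linarith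
  qed
qed

lemma f_formula: "r < 4 \<Longrightarrow> f (4*n+r) = min (f n + r) (f (n+1) + 4 - r)"
proof -
  assume r: "r < 4"
  have u1: "int (f (4*n+r)) \<le> int (f n) + int r" using f_upper[of "4*n+r" n] by simp
  have u2: "int (f (4*n+r)) \<le> int (f (n+1)) + 4 - int r" using f_upper[of "4*n+r" "n+1"] r by simp
  obtain m where m: "int (f m) + \<bar>int (4*n+r) - 4 * int m\<bar> \<le> int (f (4*n+r))" using f_lower by blast
  have l: "int (f n) + int r \<le> int (f (4*n+r)) \<or> int (f (n+1)) + 4 - int r \<le> int (f (4*n+r))"
  proof (cases "m \<le> n")
    case True
    have "int (f n) \<le> int (f m) + \<bar>int n - int m\<bar>" by (rule f_lip)
    then show ?thesis using m True r by auto
  next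
    case False
    have "int (f (n+1)) \<le> int (f m) + \<bar>int (n+1) - int m\<bar>" by (rule f_lip)
    then show ?thesis using m False r by auto
  qed
  show ?thesis using u1 u2 l r by linarith
qed


lemma f_ivt: "k \<le> f j \<Longrightarrow> \<exists>j'\<le>j. f j' = k"
proof (induction j)
  case 0 then show ?case using f_0 by simp
next
  case (Suc j)
  show ?case
  proof (cases "k \<le> f j")
    case True then show ?thesis using Suc by (meson le_Suc_eq)
  next
    case False
    then have "f (Suc j) = k" using Suc.prems f_suc[of j] by simp
    then show ?thesis by blast
  qed
qed

lemma two_level:
  assumes d: "\<bar>int j - 16 * int i\<bar> \<le> 9" shows "f j \<le> f i + 3"
proof -
  have A: "int (f j) \<le> int (f i) + 3" if "int (f j) \<le> int (f m) + \<bar>int j - 4 * int m\<bar>"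
      "int (f m) \<le> int (f i) + \<bar>int m - 4 * int i\<bar>" "\<bar>int j - 4 * int m\<bar> + \<bar>int m - 4 * int i\<bar> \<le> 3" for m
    using that by linarith
  have B: "int (f j) \<le> int (f i) + 3" if "\<bar>int j - 4 * int m\<bar> + \<bar>int m - 4 * int i\<bar> \<le> 3" for m
  proof -
    have "int (f m) \<le> int (f i) + \<bar>int m - 4 * int i\<bar>" using f_lip[of m "4*i"] f4[of i] by simp
    then show ?thesis using A[OF f_upper _ that] by blast
  qed
  consider "int j - 16 * int i \<le> -7" | "-6 \<le> int j - 16 * int i" "int j - 16 * int i \<le> -3"
    | "-2 \<le> int j - 16 * int i" "int j - 16 * int i \<le> 2" | "3 \<le> int j - 16 * int i" "int j - 16 * int i \<le> 6"
    | "7 \<le> int j - 16 * int i" by linarith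
  then have "int (f j) \<le> int (f i) + 3"
  proof cases
    case 1
    then have "i \<ge> 1" by linarith
    then show ?thesis using 1 d by (intro B[of "4*i-2"]) (simp add: of_nat_diff)
  next
    case 2
    then have "i \<ge> 1" by linarith
    then show ?thesis using 2 d by (intro B[of "4*i-1"]) (simp add: of_nat_diff)
  next
    case 3 then show ?thesis by (intro B[of "4*i"]) simp
  next
    case 4 then show ?thesis by (intro B[of "4*i+1"]) simp
  next
    case 5 then show ?thesis using d by (intro B[of "4*i+2"]) simp
  qed
  then show ?thesis by simp
qed

definition IsS :: "nat \<Rightarrow> nat \<Rightarrow> bool" where
  "IsS k n \<longleftrightarrow> f n = k \<and> (\<forall>j<n. f j \<noteq> k)"

lemma IsS_SP: "IsS k n \<Longrightarrow> SP_t k = n"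
  unfolding IsS_def SP_t_def PPL_f
  by (rule Least_equality) (auto simp: not_less[symmetric])

lemma IsS_step:
  assumes k: "0 < k" and S: "IsS k n" shows "IsS (k+3) (16*n-6)"
proof -
  have fn: "f n = k" and lt: "\<forall>j<n. f j \<noteq> k" using S unfolding IsS_def by auto
  have n0: "n \<noteq> 0"
  proof
    assume "n = 0" then show False using fn k f_0 by simp
  qed
  have below: "f j < k" if "j < n" for j
  proof (rule ccontr)
    assume "\<not> f j < k"
    then obtain j' where "j' \<le> j" "f j' = k" using f_ivt[of k j] by auto
    then show False using lt that by auto
  qed
  obtain p where p: "n = p + 1" using n0 by (metis Suc_eq_plus1 not0_implies_Suc)
  have fp: "f p = k - 1" using below[of p] fn f_suc[of p] p by simp
  have f1: "f (4*p+2) = k+1" using f_formula[of 2 p] fp fn p k by simp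
  have f2: "f (4*p+3) = k+1" using f_formula[of 3 p] fp fn p k by simp
  have e: "16*n-6 = 4*(4*p+2)+2" using p by simp
  have e3: "4*p+2+1 = 4*p+3" by simp
  have "f (4*(4*p+2)+2) = min (f (4*p+2) + 2) (f (4*p+2+1) + 4 - 2)" by (rule f_formula) simp
  also have "\<dots> = k+3" unfolding e3 f1 f2 by simp
  finally have fN: "f (16*n-6) = k+3" unfolding e .
  have "f j \<noteq> k+3" if j: "j < 16*n-6" for j
  proof -
    define i where "i = (j+6) div 16"
    have i: "i < n" using j n0 unfolding i_def by auto
    have "\<bar>int j - 16 * int i\<bar> \<le> 9" unfolding i_def by linarith
    then have "f j \<le> f i + 3" by (rule two_level)
    then show ?thesis using below[OF i] by simp
  qed
  then show ?thesis unfolding IsS_def using fN by auto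
qed

lemma small: "f 1 = 1" "f 2 = 2" "f 3 = 2" "f 4 = 1" "f 5 = 2" "f 6 = 3"
proof -
  show f1: "f 1 = 1" using f_formula[of 1 0] f_0 by (simp add: eval_nat_numeral)
  show f2: "f 2 = 2" using f_formula[of 2 0] f_0 f1 by (simp add: eval_nat_numeral)
  show f3: "f 3 = 2" using f_formula[of 3 0] f_0 f1 by (simp add: eval_nat_numeral)
  show f4: "f 4 = 1" using f_formula[of 0 1] f1 f2 by (simp add: eval_nat_numeral)
  show "f 5 = 2" using f_formula[of 1 1] f1 f2 by (simp add: eval_nat_numeral)
  show "f 6 = 3" using f_formula[of 2 1] f1 f2 by (simp add: eval_nat_numeral)
qed

lemma small_lt6: "(j::nat) < 6 \<Longrightarrow> j = 0 \<or> j = 1 \<or> j = 2 \<or> j = 3 \<or> j = 4 \<or> j = 5" by arith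

lemma IsS_1: "IsS 1 1" using small f_0 unfolding IsS_def by auto
lemma IsS_2: "IsS 2 2" unfolding IsS_def
proof (intro conjI allI impI)
  fix j :: nat assume "j < 2" then have "j = 0 \<or> j = 1" by arith
  then show "f j \<noteq> 2" using small f_0 by auto
qed (simp add: small)
lemma IsS_3: "IsS 3 6" unfolding IsS_def
proof (intro conjI allI impI)
  fix j :: nat assume "j < 6" then have "j = 0 \<or> j = 1 \<or> j = 2 \<or> j = 3 \<or> j = 4 \<or> j = 5" by arith
  then show "f j \<noteq> 3" using small f_0 by auto
qed (simp add: small)

lemma IsS_exists: "0 < k \<Longrightarrow> \<exists>n. IsS k n"
proof (induction k rule: less_induct)
  case (less k)
  consider "k = 1" | "k = 2" | "k = 3" | "k \<ge> 4" using less.prems by linarith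
  then show ?case
  proof cases
    case 1 then show ?thesis using IsS_1 by blast
  next
    case 2 then show ?thesis using IsS_2 by blast
  next
    case 3 then show ?thesis using IsS_3 by blast
  next
    case 4
    then have "k-3 < k" "0 < k-3" by auto
    then obtain n where "IsS (k-3) n" using less.IH by blast
    then show ?thesis using IsS_step[of "k-3" n] 4 by auto
  qed
qed

theorem proposition14:
  shows "SP_t 1 = 1 \<and> SP_t 2 = 2 \<and> SP_t 3 = 6 \<and>
         (\<forall>k>0. SP_t (k + 3) = 16 * SP_t k - 6)"
proof (intro conjI allI impI)
  show "SP_t 1 = 1" using IsS_1 by (rule IsS_SP)
  show "SP_t 2 = 2" using IsS_2 by (rule IsS_SP)
  show "SP_t 3 = 6" using IsS_3 by (rule IsS_SP)
  fix k :: nat assume k: "0 < k"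
  obtain n where n: "IsS k n" using IsS_exists[OF k] by blast
  show "SP_t (k + 3) = 16 * SP_t k - 6" using IsS_SP[OF n] IsS_SP[OF IsS_step[OF k n]] by simp
qed

end
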